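(* Let $\mathscr{H}$ be a complex Hilbert space and $A\in\mathbb{B}(\mathscr{H})$. Then $$w^2(A)\leq\frac{1}{4}\, w^2\left(|A|+i|A^*|\right)+\frac{1}{8}\left\||A|^2+|A^*|^2\right\|+\frac{1}{4}\,w\left(|A||A^*|\right).$$
   Context: $\mathbb{B}(\mathscr{H})$ denotes the algebra of bounded linear operators on $\mathscr{H}$; $\|\cdot\|$ is the operator norm. For $T\in\mathbb{B}(\mathscr{H})$, $|T|=(T^*T)^{1/2}$ is the positive square root of $T^*T$, and $w(T)=\sup\{|\langle Tx,x\rangle|: x\in\mathscr{H},\ \|x\|=1\}$ is the numerical radius. *)

theory Defs
  imports "HOL-Analysis.Analysis"
begin

text \<open>A complex Hilbert space: a real Banach space carrying a complex scalar
multiplication compatible with the real one, and a complex inner product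
(conjugate-linear in the first argument, linear in the second) inducing the norm.\<close>

class chilbert = banach +
  fixes scaleC :: "complex \<Rightarrow> 'a \<Rightarrow> 'a"
    and cinner :: "'a \<Rightarrow> 'a \<Rightarrow> complex"
  assumes scaleC_add_right: "scaleC c (x + y) = scaleC c x + scaleC c y"
    and scaleC_add_left: "scaleC (b + c) x = scaleC b x + scaleC c x"
    and scaleC_scaleC: "scaleC b (scaleC c x) = scaleC (b * c) x"
    and scaleC_one: "scaleC 1 x = x"
    and scaleR_scaleC: "scaleR r x = scaleC (complex_of_real r) x"
    and cinner_commute: "cinner x y = cnj (cinner y x)"
    and cinner_add_left: "cinner (x + y) z = cinner x z + cinner y z"
    and cinner_scaleC_left: "cinner (scaleC c x) y = cnj c * cinner x y"
    and cinner_self_real: "Im (cinner x x) = 0"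
    and cinner_self_nonneg: "0 \<le> Re (cinner x x)"
    and cinner_self_eq_zero: "cinner x x = 0 \<longleftrightarrow> x = 0"
    and norm_eq_sqrt_cinner: "norm x = sqrt (Re (cinner x x))"

definition bounded_clinear :: "('a::chilbert \<Rightarrow> 'a) \<Rightarrow> bool" where
  "bounded_clinear T \<longleftrightarrow>
     (\<forall>x y. T (x + y) = T x + T y) \<and>
     (\<forall>c x. T (scaleC c x) = scaleC c (T x)) \<and>
     (\<exists>K. \<forall>x. norm (T x) \<le> norm x * K)"

definition adj :: "('a::chilbert \<Rightarrow> 'a) \<Rightarrow> ('a \<Rightarrow> 'a)" where
  "adj T = (THE S. \<forall>x y. cinner (T x) y = cinner x (S y))"

definition positive_op :: "('a::chilbert \<Rightarrow> 'a) \<Rightarrow> bool" where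
  "positive_op T \<longleftrightarrow> bounded_clinear T \<and>
     (\<forall>x. Im (cinner (T x) x) = 0 \<and> 0 \<le> Re (cinner (T x) x))"

definition sqrt_op :: "('a::chilbert \<Rightarrow> 'a) \<Rightarrow> ('a \<Rightarrow> 'a)" where
  "sqrt_op T = (THE S. positive_op S \<and> S \<circ> S = T)"

definition abs_op :: "('a::chilbert \<Rightarrow> 'a) \<Rightarrow> ('a \<Rightarrow> 'a)" where
  "abs_op T = sqrt_op (adj T \<circ> T)"

text \<open>Numerical radius w(T) = sup { |<Tx,x>| : ||x|| = 1 } (0 is inserted so that
the trivial space gets w = 0; this does not change the value otherwise).\<close>
definition numrad :: "('a::chilbert \<Rightarrow> 'a) \<Rightarrow> real" where
  "numrad T = Sup (insert 0 {cmod (cinner (T x) x) | x. norm x = 1})"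

end

theory Submission
  imports Defs "HOL-Computational_Algebra.Formal_Power_Series"
begin



definition bco :: "nat \<Rightarrow> real" where
  "bco n = ((1/2::real) gchoose n) * (-1)^n"

lemma bco_0: "bco 0 = 1" by (simp add: bco_def)

lemma bco_alt: "bco n = ((of_nat n - 3/2) gchoose n)"
proof -
  have "((1/2::real) gchoose n) = (-1)^n * ((of_nat n - 1/2 - 1) gchoose n)"
    by (rule gbinomial_negated_upper)
  then have "bco n = ((-1)^n * (-1)^n) * ((of_nat n - 1/2 - 1) gchoose n)"
    by (simp add: bco_def mult_ac)
  also have "(-1::real)^n * (-1)^n = 1" by (simp add: power_mult_distrib[symmetric])
  finally show ?thesis by simp
qed

lemma bco_nonpos: assumes "n \<ge> 1" shows "bco n \<le> 0"
proof -
  obtain m where n: "n = Suc m" using assms by (cases n) auto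
  have "bco n = (\<Prod>i = 0..<Suc m. (of_nat (Suc m) - 3/2 - of_nat i) / of_nat (Suc m - i))"
    unfolding bco_alt n by (rule gbinomial_altdef_of_nat)
  also have "\<dots> = (\<Prod>i = 0..<m. (of_nat (Suc m) - 3/2 - of_nat i) / of_nat (Suc m - i))
        * ((of_nat (Suc m) - 3/2 - of_nat m) / of_nat (Suc m - m))"
    by (simp add: prod.atLeast0_lessThan_Suc)
  also have "\<dots> \<le> 0"
  proof (rule mult_nonneg_nonpos)
    show "0 \<le> (\<Prod>i = 0..<m. (of_nat (Suc m) - 3/2 - of_nat i) / of_nat (Suc m - i) :: real)"
    proof (rule prod_nonneg)
      fix i assume "i \<in> {0..<m}"
      then have "real i + 1 \<le> real m" by auto
      then show "0 \<le> (of_nat (Suc m) - 3/2 - of_nat i) / (of_nat (Suc m - i) :: real)"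
        by (intro divide_nonneg_nonneg) auto
    qed
    show "(of_nat (Suc m) - 3/2 - of_nat m) / of_nat (Suc m - m) \<le> (0::real)" by simp
  qed
  finally show ?thesis .
qed

lemma bco_partial_nonneg: "0 \<le> (\<Sum>k\<le>N. bco k)"
proof -
  have "(\<Sum>k\<le>N. bco k) = (-1)^N * ((1/2 - 1) gchoose N)"
    unfolding bco_def by (rule gbinomial_sum_lower_neg)
  also have "((1/2 - 1::real) gchoose N) = (-1)^N * ((of_nat N - (1/2 - 1) - 1) gchoose N)"
    by (rule gbinomial_negated_upper)
  finally have e1: "(\<Sum>k\<le>N. bco k) = ((-1)^N * (-1)^N) * ((of_nat N - 1/2) gchoose N)"
    by (simp add: mult_ac)
  have e2: "(-1::real)^N * (-1)^N = 1" by (simp add: power_mult_distrib[symmetric])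
  have e3: "((of_nat N - 1/2::real) gchoose N) = (\<Prod>i = 0..<N. (of_nat N - 1/2 - of_nat i) / of_nat (N - i))"
    by (rule gbinomial_altdef_of_nat)
  have "(\<Prod>i = 0..<N. (of_nat N - 1/2 - of_nat i) / of_nat (N - i)) \<ge> (0::real)"
  proof (rule prod_nonneg)
    fix i assume "i \<in> {0..<N}"
    then have "real i + 1 \<le> real N" by auto
    then show "0 \<le> (of_nat N - 1/2 - of_nat i) / (of_nat (N - i) :: real)"
      by (intro divide_nonneg_nonneg) auto
  qed
  then show ?thesis using e1 e2 e3 by simp
qed

lemma bco_conv: "(\<Sum>i\<le>k. bco i * bco (k - i)) = (if k = 0 then 1 else if k = 1 then -1 else 0)"
proof -
  have "(\<Sum>i\<le>k. bco i * bco (k - i)) = (\<Sum>i=0..k. (-1)^k * (((1/2::real) gchoose i) * ((1/2) gchoose (k - i))))"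
    unfolding atMost_atLeast0
  proof (rule sum.cong)
    fix i assume "i \<in> {0..k}"
    then have "(-1::real)^i * (-1)^(k-i) = (-1)^k" by (simp add: power_add[symmetric])
    then show "bco i * bco (k - i) = (-1)^k * (((1/2::real) gchoose i) * ((1/2) gchoose (k - i)))"
      unfolding bco_def by (metis (no_types, lifting) mult.commute mult.left_commute)
  qed simp
  also have "\<dots> = (-1)^k * ((1/2 + 1/2::real) gchoose k)"
    by (simp add: sum_distrib_left[symmetric] gbinomial_Vandermonde)
  also have "((1/2 + 1/2::real) gchoose k) = of_nat (1 choose k)"
    using binomial_gbinomial[of 1 k, where 'a=real] by simp
  finally show ?thesis
    by (cases k; cases "k - 1") auto
qed

lemma bco_abs_partial: "(\<Sum>k\<le>N. \<bar>bco k\<bar>) \<le> 2"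
proof -
  have "(\<Sum>k\<le>N. \<bar>bco k\<bar>) = (\<Sum>k\<le>N. (if k = 0 then 2 else 0) - bco k)"
  proof (rule sum.cong)
    fix k assume "k \<in> {..N}"
    show "\<bar>bco k\<bar> = (if k = 0 then 2 else 0) - bco k"
      using bco_nonpos[of k] by (cases "k = 0") (auto simp: bco_0)
  qed simp
  also have "\<dots> = (\<Sum>k\<le>N. (if k = 0 then 2 else 0)) - (\<Sum>k\<le>N. bco k)"
    by (simp add: sum_subtractf)
  also have "(\<Sum>k\<le>N. (if k = 0 then 2 else 0)) = (2::real)"
    by (simp add: sum.delta)
  finally show ?thesis using bco_partial_nonneg[of N] by simp
qed

lemma bco_summable: "summable (\<lambda>n. \<bar>bco n\<bar>)"
  by (rule bounded_imp_summable[where B=2]) (auto intro: bco_abs_partial)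

lemma bco_summable': "summable bco"
  using bco_summable summable_rabs_cancel by blast

lemma bco_suminf_nonneg: "0 \<le> suminf bco"
proof -
  have "(\<lambda>n. \<Sum>k<n. bco k) \<longlonglongrightarrow> suminf bco" using bco_summable' summable_LIMSEQ by blast
  moreover have "\<forall>\<^sub>F n in sequentially. 0 \<le> (\<Sum>k<n. bco k)"
  proof -
    have "0 \<le> (\<Sum>k<n. bco k)" for n
      by (cases n) (auto simp: lessThan_Suc_atMost bco_partial_nonneg)
    then show ?thesis by simp
  qed
  ultimately show ?thesis by (rule tendsto_lowerbound) simp
qed




lemma (in bounded_bilinear) Cauchy_product_sums_bil:
  assumes a: "summable (\<lambda>k. norm (a k))" and a': "summable a"
    and b: "summable (\<lambda>k. norm (b k))" and b': "summable b"
  shows "(\<lambda>k. \<Sum>i\<le>k. prod (a i) (b (k - i))) sums (prod (\<Sum>k. a k) (\<Sum>k. b k))"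
proof -
  obtain K where K: "K \<ge> 0" "\<And>x y. norm (prod x y) \<le> norm x * norm y * K"
    using nonneg_bounded by blast
  let ?S1 = "\<lambda>n::nat. {..<n} \<times> {..<n}"
  let ?S2 = "\<lambda>n::nat. {(i,j). i + j < n}"
  have S1_mono: "\<And>m n. m \<le> n \<Longrightarrow> ?S1 m \<subseteq> ?S1 n" by auto
  have S2_le_S1: "\<And>n. ?S2 n \<subseteq> ?S1 n" by auto
  have S1_le_S2: "\<And>n. ?S1 (n div 2) \<subseteq> ?S2 n" by auto
  have finite_S1: "\<And>n. finite (?S1 n)" by simp
  with S2_le_S1 have finite_S2: "\<And>n. finite (?S2 n)" by (rule finite_subset)

  let ?g = "\<lambda>(i,j). prod (a i) (b j)"
  let ?f = "\<lambda>(i,j). norm (a i) * norm (b j) * K"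
  have f_nonneg: "\<And>x. 0 \<le> ?f x" using K by auto
  then have norm_sum_f: "\<And>A. norm (sum ?f A) = sum ?f A"
    unfolding real_norm_def
    by (simp only: abs_of_nonneg sum_nonneg [rule_format])
  have sp: "prod (\<Sum>k<n. a k) (\<Sum>k<n. b k) = sum ?g (?S1 n)" for n
  proof -
    have "prod (\<Sum>k<n. a k) (\<Sum>k<n. b k) = (\<Sum>i<n. prod (a i) (\<Sum>k<n. b k))"
      by (rule sum_left)
    also have "\<dots> = (\<Sum>i<n. \<Sum>j<n. prod (a i) (b j))"
      by (simp add: sum_right)
    also have "\<dots> = sum ?g (?S1 n)"
      by (simp add: sum.cartesian_product)
    finally show ?thesis .
  qed
  have "(\<lambda>n. prod (\<Sum>k<n. a k) (\<Sum>k<n. b k)) \<longlonglongrightarrow> prod (\<Sum>k. a k) (\<Sum>k. b k)"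
    by (intro tendsto summable_LIMSEQ a' b')
  then have 1: "(\<lambda>n. sum ?g (?S1 n)) \<longlonglongrightarrow> prod (\<Sum>k. a k) (\<Sum>k. b k)"
    by (simp only: sp)
  have "(\<lambda>n. (\<Sum>k<n. norm (a k)) * (\<Sum>k<n. norm (b k)) * K) \<longlonglongrightarrow> (\<Sum>k. norm (a k)) * (\<Sum>k. norm (b k)) * K"
    using a b by (intro tendsto_mult summable_LIMSEQ tendsto_const)
  moreover have "(\<Sum>k<n. norm (a k)) * (\<Sum>k<n. norm (b k)) * K = sum ?f (?S1 n)" for n
  proof -
    have "(\<Sum>k<n. norm (a k)) * (\<Sum>k<n. norm (b k)) * K = (\<Sum>i<n. \<Sum>j<n. norm (a i) * norm (b j) * K)"
      by (subst sum_product) (simp add: sum_distrib_right)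
    also have "\<dots> = sum ?f (?S1 n)"
      by (simp add: sum.cartesian_product)
    finally show ?thesis .
  qed
  ultimately have "(\<lambda>n. sum ?f (?S1 n)) \<longlonglongrightarrow> (\<Sum>k. norm (a k)) * (\<Sum>k. norm (b k)) * K"
    by simp
  then have "convergent (\<lambda>n. sum ?f (?S1 n))"
    by (rule convergentI)
  then have Cauchy: "Cauchy (\<lambda>n. sum ?f (?S1 n))"
    by (rule convergent_Cauchy)
  have "Zfun (\<lambda>n. sum ?f (?S1 n - ?S2 n)) sequentially"
  proof (rule ZfunI, simp only: eventually_sequentially norm_sum_f)
    fix r :: real
    assume r: "0 < r"
    from CauchyD [OF Cauchy r] obtain N
      where "\<forall>m\<ge>N. \<forall>n\<ge>N. norm (sum ?f (?S1 m) - sum ?f (?S1 n)) < r" ..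
    then have "\<And>m n. N \<le> n \<Longrightarrow> n \<le> m \<Longrightarrow> norm (sum ?f (?S1 m - ?S1 n)) < r"
      by (simp only: sum_diff finite_S1 S1_mono)
    then have N: "\<And>m n. N \<le> n \<Longrightarrow> n \<le> m \<Longrightarrow> sum ?f (?S1 m - ?S1 n) < r"
      by (simp only: norm_sum_f)
    show "\<exists>N. \<forall>n\<ge>N. sum ?f (?S1 n - ?S2 n) < r"
    proof (intro exI allI impI)
      fix n
      assume "2 * N \<le> n"
      then have n: "N \<le> n div 2" by simp
      have "sum ?f (?S1 n - ?S2 n) \<le> sum ?f (?S1 n - ?S1 (n div 2))"
        by (intro sum_mono2 finite_Diff finite_S1 f_nonneg Diff_mono subset_refl S1_le_S2)
      also have "\<dots> < r"
        using n div_le_dividend by (rule N)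
      finally show "sum ?f (?S1 n - ?S2 n) < r" .
    qed
  qed
  then have "Zfun (\<lambda>n. sum ?g (?S1 n - ?S2 n)) sequentially"
    apply (rule Zfun_le [rule_format])
    apply (simp only: norm_sum_f)
    apply (rule order_trans [OF norm_sum sum_mono])
    apply (auto simp add: K)
    done
  then have 2: "(\<lambda>n. sum ?g (?S1 n) - sum ?g (?S2 n)) \<longlonglongrightarrow> 0"
    unfolding tendsto_Zfun_iff diff_0_right
    by (simp only: sum_diff finite_S1 S2_le_S1)
  with 1 have "(\<lambda>n. sum ?g (?S2 n)) \<longlonglongrightarrow> prod (\<Sum>k. a k) (\<Sum>k. b k)"
    by (rule Lim_transform2)
  then show ?thesis
    by (simp only: sums_def sum.triangle_reindex)
qed




section \<open>Basic inner product algebra\<close>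

lemma cinner_add_right: "cinner x (y + z) = cinner x y + cinner x (z::'a::chilbert)"
  by (metis cinner_commute cinner_add_left complex_cnj_add)

lemma cinner_scaleC_right: "cinner x (scaleC c y) = c * cinner x (y::'a::chilbert)"
  by (metis cinner_commute cinner_scaleC_left complex_cnj_cnj complex_cnj_mult)

lemma cinner_zero_left[simp]: "cinner 0 (y::'a::chilbert) = 0"
  using cinner_add_left[of "0::'a" 0 y] by simp

lemma cinner_zero_right[simp]: "cinner x (0::'a::chilbert) = 0"
  using cinner_add_right[of x "0::'a" 0] by simp

lemma cinner_minus_left: "cinner (- x) (y::'a::chilbert) = - cinner x y"
  using cinner_add_left[of x "-x" y] by (simp add: eq_neg_iff_add_eq_0 add.commute)

lemma cinner_minus_right: "cinner x (- y::'a::chilbert) = - cinner x y"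
  using cinner_add_right[of x y "-y"] by (simp add: eq_neg_iff_add_eq_0 add.commute)

lemma cinner_diff_left: "cinner (x - y) (z::'a::chilbert) = cinner x z - cinner y z"
  using cinner_add_left[of x "-y" z] by (simp add: cinner_minus_left)

lemma cinner_diff_right: "cinner x (y - z::'a::chilbert) = cinner x y - cinner x z"
  using cinner_add_right[of x y "-z"] by (simp add: cinner_minus_right)

lemma cinner_scaleR_left: "cinner (scaleR r x) (y::'a::chilbert) = of_real r * cinner x y"
  by (simp add: scaleR_scaleC cinner_scaleC_left)

lemma cinner_scaleR_right: "cinner x (scaleR r y::'a::chilbert) = of_real r * cinner x y"
  by (simp add: scaleR_scaleC cinner_scaleC_right)

lemmas cinner_simps = cinner_add_left cinner_add_right cinner_scaleC_left cinner_scaleC_right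
  cinner_diff_left cinner_diff_right cinner_minus_left cinner_minus_right
  cinner_scaleR_left cinner_scaleR_right

lemma cnj_mult_self: "cnj c * c = complex_of_real ((cmod c)^2)"
  by (metis complex_norm_square mult.commute of_real_power)

lemma mult_cnj_self: "c * cnj c = complex_of_real ((cmod c)^2)"
  by (metis complex_norm_square of_real_power)

lemma cinner_self: "cinner x (x::'a::chilbert) = of_real ((norm x)^2)"
proof -
  have "(norm x)^2 = Re (cinner x x)"
    using norm_eq_sqrt_cinner[of x] cinner_self_nonneg[of x] by simp
  then show ?thesis using cinner_self_real[of x] by (simp add: complex_eq_iff)
qed

lemma Re_cinner_self: "Re (cinner x (x::'a::chilbert)) = (norm x)^2"
  by (simp add: cinner_self)

lemma cinner_ext: assumes "\<And>y. cinner y x = cinner y (z::'a::chilbert)" shows "x = z"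
proof -
  have "cinner (x - z) (x - z) = 0" using assms[of "x - z"] by (simp add: cinner_diff_right)
  then show ?thesis by (simp add: cinner_self_eq_zero)
qed

lemma cinner_ext': assumes "\<And>y. cinner x y = cinner (z::'a::chilbert) y" shows "x = z"
  by (rule cinner_ext) (metis assms cinner_commute)

lemma scaleC_zero_right[simp]: "scaleC c (0::'a::chilbert) = 0"
  using scaleC_add_right[of c "0::'a" 0] by simp

lemma scaleC_zero_left[simp]: "scaleC 0 (x::'a::chilbert) = 0"
  using scaleC_add_left[of 0 0 x] by simp

lemma scaleC_of_real: "scaleC (of_real r) (x::'a::chilbert) = scaleR r x"
  by (simp add: scaleR_scaleC)

lemma scaleC_minus_right: "scaleC c (- x) = - scaleC c (x::'a::chilbert)"
  by (metis add.inverse_unique add.right_inverse scaleC_add_right scaleC_zero_right)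

lemma scaleC_diff_right: "scaleC c (x - y) = scaleC c x - scaleC c (y::'a::chilbert)"
  by (metis diff_conv_add_uminus scaleC_add_right scaleC_minus_right)

lemma scaleC_minus_left: "scaleC (- c) x = - scaleC c (x::'a::chilbert)"
  by (metis add.inverse_unique add.right_inverse scaleC_add_left scaleC_zero_left)

lemma norm_scaleC: "norm (scaleC c x) = cmod c * norm (x::'a::chilbert)"
proof -
  have "(norm (scaleC c x))^2 = Re (cinner (scaleC c x) (scaleC c x))" by (simp add: Re_cinner_self)
  also have "\<dots> = Re (cnj c * c * cinner x x)" by (simp add: cinner_simps mult_ac)
  also have "cnj c * c = of_real ((cmod c)^2)" by (rule cnj_mult_self)
  also have "Re (of_real ((cmod c)^2) * cinner x x) = (cmod c)^2 * (norm x)^2"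
    by (simp add: cinner_self)
  finally have "(norm (scaleC c x))^2 = (cmod c * norm x)^2" by (simp add: power_mult_distrib)
  then show ?thesis by (simp add: power2_eq_iff_nonneg)
qed

section \<open>Operators\<close>

lemma bclD:
  assumes "bounded_clinear T"
  shows "T (x + y) = T x + T y" "T (scaleC c x) = scaleC c (T x)"
  using assms unfolding bounded_clinear_def by auto

lemma bcl_bound: assumes "bounded_clinear T" obtains K where "K > 0" "\<And>x. norm (T x) \<le> norm x * K"
proof -
  obtain K where K: "\<And>x. norm (T x) \<le> norm x * K" using assms unfolding bounded_clinear_def by auto
  show ?thesis
  proof (rule that[of "max K 1"])
    fix x show "norm (T x) \<le> norm x * max K 1"
      using K[of x] by (meson max.cobounded1 mult_left_mono norm_ge_zero order_trans)
  qed simp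
qed

lemma bcl_bounded_linear: assumes "bounded_clinear T" shows "bounded_linear T"
proof -
  obtain K where K: "\<And>x. norm (T x) \<le> norm x * K" using assms unfolding bounded_clinear_def by auto
  show ?thesis
    by (rule bounded_linear_intro[where K=K]) (auto simp: bclD[OF assms] scaleR_scaleC K)
qed

lemma bcl_simps:
  assumes "bounded_clinear T"
  shows "T 0 = 0" "T (- x) = - T x" "T (x - y) = T x - T y" "T (scaleR r x) = scaleR r (T x)"
proof -
  interpret bounded_linear T by (rule bcl_bounded_linear[OF assms])
  show "T 0 = 0" "T (- x) = - T x" "T (x - y) = T x - T y" "T (scaleR r x) = scaleR r (T x)"
    by (auto simp: zero neg diff scaleR)
qed

lemma bcl_comp: "bounded_clinear S \<Longrightarrow> bounded_clinear T \<Longrightarrow> bounded_clinear (S \<circ> T)"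
proof -
  assume S: "bounded_clinear S" and T: "bounded_clinear T"
  obtain K1 where K1: "\<And>x. norm (S x) \<le> norm x * K1" "K1 > 0" using bcl_bound[OF S] by metis
  obtain K2 where K2: "\<And>x. norm (T x) \<le> norm x * K2" "K2 > 0" using bcl_bound[OF T] by metis
  have "norm (S (T x)) \<le> norm x * (K2 * K1)" for x
    using K1(1)[of "T x"] K2(1)[of x] K1(2)
    by (metis (no_types, opaque_lifting) mult.assoc mult_right_mono order_trans less_imp_le)
  then show ?thesis unfolding bounded_clinear_def
    by (auto simp: bclD[OF S] bclD[OF T])
qed

lemma bcl_id: "bounded_clinear (\<lambda>x::'a::chilbert. x)"
  unfolding bounded_clinear_def by (auto intro!: exI[of _ 1])

lemma bcl_add: "bounded_clinear S \<Longrightarrow> bounded_clinear T \<Longrightarrow> bounded_clinear (\<lambda>x. S x + T x)"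
proof -
  assume S: "bounded_clinear S" and T: "bounded_clinear T"
  obtain K1 where K1: "\<And>x. norm (S x) \<le> norm x * K1" using bcl_bound[OF S] by metis
  obtain K2 where K2: "\<And>x. norm (T x) \<le> norm x * K2" using bcl_bound[OF T] by metis
  have "norm (S x + T x) \<le> norm x * (K1 + K2)" for x
    using K1[of x] K2[of x] norm_triangle_ineq[of "S x" "T x"] by (simp add: distrib_left)
  then show ?thesis unfolding bounded_clinear_def
    by (auto simp: bclD[OF S] bclD[OF T] scaleC_add_right)
qed

lemma bcl_scale: "bounded_clinear T \<Longrightarrow> bounded_clinear (\<lambda>x. scaleC c (T x))"
proof -
  assume T: "bounded_clinear T"
  obtain K where K: "\<And>x. norm (T x) \<le> norm x * K" using bcl_bound[OF T] by metis
  have "norm (scaleC c (T x)) \<le> norm x * (cmod c * K)" for x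
  proof -
    have "cmod c * norm (T x) \<le> cmod c * (norm x * K)" using K[of x] by (rule mult_left_mono) simp
    then show ?thesis by (simp add: norm_scaleC mult_ac)
  qed
  then show ?thesis unfolding bounded_clinear_def
    by (auto simp: bclD[OF T] scaleC_add_right scaleC_scaleC mult.commute intro!: exI[of _ "cmod c * K"])
qed

lemma bcl_scaleR: "bounded_clinear T \<Longrightarrow> bounded_clinear (\<lambda>x. scaleR r (T x))"
  using bcl_scale[of T "of_real r"] by (simp add: scaleC_of_real)

lemma bcl_diff: "bounded_clinear S \<Longrightarrow> bounded_clinear T \<Longrightarrow> bounded_clinear (\<lambda>x. S x - T x)"
  using bcl_add[of S "\<lambda>x. scaleR (-1) (T x)"] bcl_scaleR[of T "-1"] by simp

section \<open>Self-adjointness of positive operators and Cauchy--Schwarz\<close>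

lemma positive_selfadj:
  assumes "positive_op K"
  shows "cinner (K x) y = cinner x (K y)"
proof -
  have K: "bounded_clinear K" and r: "\<And>z. Im (cinner (K z) z) = 0"
    using assms unfolding positive_op_def by auto
  define u where "u = cinner (K x) y"
  define v where "v = cinner (K y) x"
  have "Im (cinner (K (x + y)) (x + y)) = 0" by (rule r)
  then have 1: "Im (u + v) = 0"
    using r[of x] r[of y] by (simp add: bclD[OF K] cinner_simps u_def v_def)
  have "Im (cinner (K (x + scaleC \<i> y)) (x + scaleC \<i> y)) = 0" by (rule r)
  then have "Im (cinner (K x) x + \<i> * u - \<i> * v + cinner (K y) y) = 0"
    by (simp add: bclD[OF K] cinner_simps u_def v_def algebra_simps)
  then have 2: "Re (u - v) = 0" using r[of x] r[of y] by simp
  have "v = cnj u" using 1 2 by (simp add: complex_eq_iff)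
  then show ?thesis by (metis cinner_commute complex_cnj_cnj u_def v_def)
qed

lemma quad_ineq_aux:
  fixes A B C :: real
  assumes "B \<ge> 0" "C \<ge> 0" "\<And>s. 0 \<le> A - 2 * s * B + s^2 * B * C"
  shows "B \<le> A * C"
proof (cases "B = 0")
  case True then show ?thesis using assms(3)[of 0] assms(2) by simp
next
  case False
  then have Bp: "B > 0" using assms(1) by simp
  show ?thesis
  proof (cases "C = 0")
    case True
    then have "0 \<le> A - 2 * ((A + 1) / (2 * B)) * B" using assms(3)[of "(A+1)/(2*B)"] by simp
    then have False using Bp by (simp add: field_simps)
    then show ?thesis ..
  next
    case False
    then have Cp: "C > 0" using assms(2) by simp
    have "0 \<le> A - 2 * (1/C) * B + (1/C)^2 * B * C" by (rule assms(3))
    then have "0 \<le> A - B / C" using Cp by (simp add: field_simps power2_eq_square)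
    then show ?thesis using Cp by (simp add: field_simps)
  qed
qed

lemma positive_CS:
  assumes "positive_op K"
  shows "(cmod (cinner (K x) y))^2 \<le> Re (cinner (K x) x) * Re (cinner (K y) y)"
proof -
  have K: "bounded_clinear K" and r: "\<And>z. Im (cinner (K z) z) = 0"
      and nn: "\<And>z. 0 \<le> Re (cinner (K z) z)"
    using assms unfolding positive_op_def by auto
  define c where "c = cinner (K x) y"
  have yx: "cinner (K y) x = cnj c"
    unfolding c_def by (metis positive_selfadj[OF assms] cinner_commute)
  have "0 \<le> Re (cinner (K x) x) - 2 * s * (cmod c)^2 + s^2 * (cmod c)^2 * Re (cinner (K y) y)" for s
  proof -
    define t where "t = - (of_real s * cnj c)"
    have "0 \<le> Re (cinner (K (x + scaleC t y)) (x + scaleC t y))" by (rule nn)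
    also have "cinner (K (x + scaleC t y)) (x + scaleC t y)
       = cinner (K x) x + t * c + cnj t * cnj c + cnj t * t * cinner (K y) y"
      by (simp add: bclD[OF K] cinner_simps c_def yx algebra_simps)
    also have "t * c = - of_real (s * (cmod c)^2)"
      unfolding t_def using cnj_mult_self[of c] by (simp add: mult.assoc)
    also have "cnj t * cnj c = - of_real (s * (cmod c)^2)"
      unfolding t_def using mult_cnj_self[of c] by (simp add: mult.assoc)
    also have "cnj t * t = of_real (s^2 * (cmod c)^2)"
    proof -
      have "cnj t * t = of_real s * of_real s * (c * cnj c)" by (simp add: t_def mult_ac)
      then show ?thesis using mult_cnj_self[of c] by (simp add: power2_eq_square)
    qed
    finally show ?thesis using r[of y] by (simp add: algebra_simps)
  qed
  then have "(cmod c)^2 \<le> Re (cinner (K x) x) * Re (cinner (K y) y)"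
    by (intro quad_ineq_aux) (auto simp: nn)
  then show ?thesis by (simp add: c_def)
qed

lemma positive_id: "positive_op (\<lambda>x::'a::chilbert. x)"
  unfolding positive_op_def by (auto simp: bcl_id cinner_self_real cinner_self_nonneg)

lemma CS: "cmod (cinner x y) \<le> norm x * norm (y::'a::chilbert)"
proof -
  have "(cmod (cinner x y))^2 \<le> (norm x)^2 * (norm y)^2"
    using positive_CS[OF positive_id, of x y] by (simp add: Re_cinner_self)
  then have "(cmod (cinner x y))^2 \<le> (norm x * norm y)^2" by (simp add: power_mult_distrib)
  then show ?thesis by (rule power2_le_imp_le) simp
qed




lemma norm_add_scaleC_sq:
  "(norm (x + scaleC t y))^2 = (norm x)^2 + Re (t * cinner x y) + Re (cnj t * cinner y x) + (cmod t)^2 * (norm (y::'a::chilbert))^2"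
proof -
  have "(norm (x + scaleC t y))^2 = Re (cinner (x + scaleC t y) (x + scaleC t y))" by (simp add: Re_cinner_self)
  also have "cinner (x + scaleC t y) (x + scaleC t y) = cinner x x + t * cinner x y + cnj t * cinner y x + (cnj t * t) * cinner y y"
    by (simp add: cinner_simps algebra_simps)
  also have "cnj t * t = of_real ((cmod t)^2)" by (rule cnj_mult_self)
  finally show ?thesis by (simp add: cinner_self)
qed

lemma orth_of_min:
  assumes "\<And>t. norm z \<le> norm (z + scaleC t (y::'a::chilbert))"
  shows "cinner z y = 0"
proof -
  define c where "c = cinner z y"
  have "0 \<le> 0 - 2 * s * (cmod c)^2 + s^2 * (cmod c)^2 * (norm y)^2" for s
  proof -
    define t where "t = - (of_real s * cnj c)"
    have "(norm z)^2 \<le> (norm (z + scaleC t y))^2" using assms[of t] by (simp add: power_mono)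
    also have "\<dots> = (norm z)^2 + Re (t * c) + Re (cnj t * cnj c) + (cmod t)^2 * (norm y)^2"
      unfolding norm_add_scaleC_sq c_def by (metis cinner_commute)
    also have "t * c = - of_real (s * (cmod c)^2)"
      unfolding t_def using cnj_mult_self[of c] by (simp add: mult.assoc)
    also have "cnj t * cnj c = - of_real (s * (cmod c)^2)"
      unfolding t_def using mult_cnj_self[of c] by (simp add: mult.assoc)
    also have "(cmod t)^2 = s^2 * (cmod c)^2"
      by (simp add: t_def norm_mult power_mult_distrib)
    finally show ?thesis by simp
  qed
  then have "(cmod c)^2 \<le> 0 * (norm y)^2"
    by (intro quad_ineq_aux) auto
  then show ?thesis by (simp add: c_def)
qed

lemma parallelogram:
  "(norm (x + y))^2 + (norm (x - y))^2 = 2 * (norm x)^2 + 2 * (norm (y::'a::chilbert))^2"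
proof -
  have "of_real ((norm (x + y))^2 + (norm (x - y))^2) = cinner (x+y) (x+y) + cinner (x-y) (x-y)"
    by (simp add: cinner_self)
  also have "\<dots> = 2 * cinner x x + 2 * cinner y y"
    by (simp add: cinner_simps algebra_simps)
  also have "\<dots> = of_real (2 * (norm x)^2 + 2 * (norm y)^2)"
    by (simp add: cinner_self)
  finally show ?thesis by (simp only: of_real_eq_iff)
qed

lemma riesz:
  fixes f :: "'a::chilbert \<Rightarrow> complex"
  assumes add: "\<And>x y. f (x + y) = f x + f y"
    and hom: "\<And>c x. f (scaleC c x) = c * f x"
    and bnd: "\<And>x. cmod (f x) \<le> norm x * K"
  shows "\<exists>z. \<forall>x. f x = cinner z x"
proof (cases "\<forall>x. f x = 0")
  case True then show ?thesis by (intro exI[of _ 0]) simp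
next
  case False
  then obtain x0 where x0: "f x0 \<noteq> 0" by auto
  have bl: "bounded_linear f"
    by (rule bounded_linear_intro[where K=K])
      (auto simp: add bnd scaleR_scaleC hom scaleR_conv_of_real)
  define M where "M = {x. f x = 1}"
  have M_ne: "norm ` M \<noteq> {}"
  proof -
    have "scaleC (1 / f x0) x0 \<in> M" using x0 by (simp add: M_def hom)
    then show ?thesis by blast
  qed
  have M_bdd: "bdd_below (norm ` M)" by (auto intro: bdd_belowI[of _ 0])
  define d where "d = Inf (norm ` M)"
  have d_le: "d \<le> norm x" if "x \<in> M" for x
    unfolding d_def using M_bdd that by (simp add: cInf_lower)
  have d_nn: "0 \<le> d" unfolding d_def using M_ne by (auto intro: cInf_greatest)
  have "\<exists>x\<in>M. norm x < d + 1 / real (Suc n)" for n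
  proof -
    have "Inf (norm ` M) < d + 1 / real (Suc n)" by (simp add: d_def)
    then obtain v where "v \<in> norm ` M" "v < d + 1 / real (Suc n)" using cInf_lessD[OF M_ne] by blast
    then show ?thesis by auto
  qed
  then obtain X where XM: "\<And>n. X n \<in> M" and Xn: "\<And>n. norm (X n) < d + 1 / real (Suc n)"
    by metis
  define del where "del n = (2 * d + 1) / real (Suc n)" for n
  have Xsq: "(norm (X n))^2 \<le> d^2 + del n" for n
  proof -
    have e: "0 < 1 / real (Suc n)" "1 / real (Suc n) \<le> 1" by auto
    have "(norm (X n))^2 \<le> (d + 1 / real (Suc n))^2"
      using Xn[of n] by (intro power_mono) auto
    also have "\<dots> = d^2 + (2 * d + 1 / real (Suc n)) * (1 / real (Suc n))"
      by (simp add: power2_eq_square algebra_simps)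
    also have "\<dots> \<le> d^2 + (2 * d + 1) * (1 / real (Suc n))"
      using e by (intro add_left_mono mult_right_mono) auto
    finally show ?thesis by (simp add: del_def)
  qed
  have fX: "f (X n) = 1" for n using XM[of n] by (simp add: M_def)
  have diff_sq: "(norm (X m - X n))^2 \<le> 2 * del m + 2 * del n" for m n
  proof -
    have "scaleC (1/2) (X m + X n) \<in> M"
      using fX by (simp add: M_def hom add)
    then have "d \<le> norm (scaleC (1/2) (X m + X n))" by (rule d_le)
    then have "2 * d \<le> norm (X m + X n)" by (simp add: norm_scaleC)
    then have "(2 * d)^2 \<le> (norm (X m + X n))^2" using d_nn by (intro power_mono) auto
    moreover have "(norm (X m + X n))^2 + (norm (X m - X n))^2 = 2 * (norm (X m))^2 + 2 * (norm (X n))^2"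
      by (rule parallelogram)
    ultimately show ?thesis using Xsq[of m] Xsq[of n] by (simp add: power2_eq_square)
  qed
  have del_mono: "del n \<le> del N" if "N \<le> n" for n N
    unfolding del_def using d_nn that by (intro divide_left_mono) auto
  have "Cauchy X"
  proof (rule metric_CauchyI)
    fix e :: real assume e: "0 < e"
    obtain N where N: "(2 * d + 1) / real (Suc N) < e^2 / 4"
    proof -
      obtain N where "real N > (2 * d + 1) * 4 / e^2" using reals_Archimedean2 by blast
      then have "(2 * d + 1) * 4 / e^2 < real (Suc N)" by simp
      then have "(2 * d + 1) * 4 < e^2 * real (Suc N)" using e by (simp add: field_simps)
      then have "(2 * d + 1) / real (Suc N) < e^2 / 4" by (simp add: field_simps)
      then show ?thesis by (rule that)
    qed
    show "\<exists>M. \<forall>m\<ge>M. \<forall>n\<ge>M. dist (X m) (X n) < e"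
    proof (intro exI allI impI)
      fix m n assume "N \<le> m" "N \<le> n"
      then have "(norm (X m - X n))^2 \<le> 4 * del N"
        using diff_sq[of m n] del_mono[of N m] del_mono[of N n] by simp
      also have "\<dots> < e^2" using N by (simp add: del_def)
      finally have "(norm (X m - X n))^2 < e^2" .
      then have "norm (X m - X n) < e" using e by (simp add: power_less_imp_less_base)
      then show "dist (X m) (X n) < e" by (simp add: dist_norm)
    qed
  qed
  then obtain z where z: "X \<longlonglongrightarrow> z" using Cauchy_convergent_iff convergent_def by blast
  have "(\<lambda>n. f (X n)) \<longlonglongrightarrow> f z" using bounded_linear.tendsto[OF bl z] .
  then have fz: "f z = 1" using fX by (simp add: LIMSEQ_const_iff)
  have "(\<lambda>n. norm (X n)) \<longlonglongrightarrow> norm z" using z by (rule tendsto_norm)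
  moreover have "(\<lambda>n. d + 1 / real (Suc n)) \<longlonglongrightarrow> d + 0"
    by (intro tendsto_add tendsto_const LIMSEQ_Suc[OF lim_inverse_n']) 
  ultimately have "norm z \<le> d"
    using Xn by (intro LIMSEQ_le[where X="\<lambda>n. norm (X n)"]) (auto intro: less_imp_le)
  have zmin: "norm z \<le> norm (z + scaleC t y)" if "f y = 0" for y t
  proof -
    have "z + scaleC t y \<in> M" using fz that by (simp add: M_def add hom)
    then show ?thesis using d_le \<open>norm z \<le> d\<close> by force
  qed
  have z0: "z \<noteq> 0" using fz hom[of 0 0] by auto
  show ?thesis
  proof (intro exI allI)
    fix x
    have "f (x - scaleC (f x) z) = 0"
      using add[of "x - scaleC (f x) z" "scaleC (f x) z"] by (simp add: hom fz)
    then have "cinner z (x - scaleC (f x) z) = 0" by (intro orth_of_min zmin)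
    then have "cinner z x = f x * of_real ((norm z)^2)"
      by (simp add: cinner_simps cinner_self)
    then show "f x = cinner (scaleC (of_real (1 / (norm z)^2)) z) x"
      using z0 by (simp add: cinner_simps field_simps)
  qed
qed

section \<open>Adjoint\<close>

lemma adj_exists:
  assumes T: "bounded_clinear T"
  shows "\<exists>S. bounded_clinear S \<and> (\<forall>x y. cinner (T x) y = cinner x (S y))"
proof -
  obtain K where K: "K > 0" "\<And>x. norm (T x) \<le> norm x * K" using bcl_bound[OF T] by metis
  have "\<exists>z. \<forall>x. cinner y (T x) = cinner z x" for y
  proof (rule riesz[where K="norm y * K"])
    fix x
    have "cmod (cinner y (T x)) \<le> norm y * norm (T x)" by (rule CS)
    also have "\<dots> \<le> norm y * (norm x * K)" using K by (intro mult_left_mono) auto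
    finally show "cmod (cinner y (T x)) \<le> norm x * (norm y * K)" by (simp add: mult_ac)
  qed (auto simp: bclD[OF T] cinner_simps)
  then obtain S where S: "\<And>y x. cinner y (T x) = cinner (S y) x" by metis
  have S': "cinner (T x) y = cinner x (S y)" for x y
    by (metis S cinner_commute)
  have "bounded_clinear S"
    unfolding bounded_clinear_def
  proof (intro conjI allI)
    fix y1 y2 show "S (y1 + y2) = S y1 + S y2"
      by (rule cinner_ext) (simp add: S'[symmetric] cinner_simps)
  next
    fix c y show "S (scaleC c y) = scaleC c (S y)"
      by (rule cinner_ext) (simp add: S'[symmetric] cinner_simps)
  next
    have "norm (S y) \<le> norm y * K" for y
    proof -
      have "(norm (S y))^2 = Re (cinner (S y) (S y))" by (simp add: Re_cinner_self)
      also have "\<dots> = Re (cinner (T (S y)) y)" by (simp add: S')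
      also have "\<dots> \<le> cmod (cinner (T (S y)) y)" by (rule complex_Re_le_cmod)
      also have "\<dots> \<le> norm (T (S y)) * norm y" by (rule CS)
      also have "\<dots> \<le> (norm (S y) * K) * norm y" using K by (intro mult_right_mono) auto
      finally have "norm (S y) * norm (S y) \<le> norm (S y) * (norm y * K)"
        by (simp add: power2_eq_square mult_ac)
      then show ?thesis
        using K(1) by (cases "norm (S y) = 0") (auto simp: mult_le_cancel_left)
    qed
    then show "\<exists>K. \<forall>x. norm (S x) \<le> norm x * K" by blast
  qed
  then show ?thesis using S' by blast
qed

lemma adj_unique:
  assumes "\<And>x y. cinner (T x) y = cinner x (S y)"
  shows "adj T = S"
proof -
  have "\<forall>x y. cinner (T x) y = cinner x (S y)" using assms by blast
  moreover have "S' = S" if "\<forall>x y. cinner (T x) y = cinner x (S' y)" for S'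
  proof
    fix y show "S' y = S y" using that assms by (intro cinner_ext) metis
  qed
  ultimately show ?thesis unfolding adj_def by (rule the_equality)
qed

lemma adj_props:
  assumes T: "bounded_clinear T"
  shows "bounded_clinear (adj T)" "\<And>x y. cinner (T x) y = cinner x (adj T y)"
proof -
  obtain S where S: "bounded_clinear S" "\<And>x y. cinner (T x) y = cinner x (S y)"
    using adj_exists[OF T] by blast
  have "adj T = S" by (rule adj_unique) (rule S(2))
  then show "bounded_clinear (adj T)" "\<And>x y. cinner (T x) y = cinner x (adj T y)" using S by auto
qed

lemma adj_left: "bounded_clinear T \<Longrightarrow> cinner (adj T x) y = cinner x (T y)"
  by (metis adj_props(2) cinner_commute)

lemma adj_adj: assumes "bounded_clinear T" shows "adj (adj T) = T"
  by (rule adj_unique) (rule adj_left[OF assms])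




definition contr :: "('a::chilbert \<Rightarrow> 'a) \<Rightarrow> bool" where
  "contr S \<longleftrightarrow> bounded_clinear S \<and> (\<forall>x. norm (S x) \<le> norm x)"

definition selfadj :: "('a::chilbert \<Rightarrow> 'a) \<Rightarrow> bool" where
  "selfadj S \<longleftrightarrow> (\<forall>x y. cinner (S x) y = cinner x (S y))"

definition psf :: "(nat \<Rightarrow> real) \<Rightarrow> ('a::chilbert \<Rightarrow> 'a) \<Rightarrow> 'a \<Rightarrow> 'a" where
  "psf a S x = (\<Sum>n. a n *\<^sub>R (S ^^ n) x)"

definition conv :: "(nat \<Rightarrow> real) \<Rightarrow> (nat \<Rightarrow> real) \<Rightarrow> nat \<Rightarrow> real" where
  "conv a b k = (\<Sum>i\<le>k. a i * b (k - i))"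

lemma funpow_bcl: "bounded_clinear S \<Longrightarrow> bounded_clinear (S ^^ n)"
proof (induction n)
  case 0 then show ?case using bcl_id by (simp add: id_def)
next
  case (Suc n) then show ?case using bcl_comp[OF Suc.prems Suc.IH] by (simp add: comp_def)
qed

lemma funpow_contr_norm: "contr S \<Longrightarrow> norm ((S ^^ n) x) \<le> norm x"
proof (induction n)
  case 0 then show ?case by simp
next
  case (Suc n) then show ?case unfolding contr_def by (metis comp_apply funpow.simps(2) order_trans)
qed

lemma funpow_selfadj: "selfadj S \<Longrightarrow> cinner ((S ^^ n) x) y = cinner x ((S ^^ n) y)"
proof (induction n arbitrary: x y)
  case 0 then show ?case by simp
next
  case (Suc n)
  have "cinner ((S ^^ Suc n) x) y = cinner ((S ^^ n) (S x)) y" by (simp add: funpow_Suc_right del: funpow.simps)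
  also have "\<dots> = cinner (S x) ((S ^^ n) y)" using Suc by simp
  also have "\<dots> = cinner x (S ((S ^^ n) y))" using Suc.prems by (simp add: selfadj_def)
  finally show ?case by simp
qed

lemma psf_summable_norm:
  assumes "contr S" "summable (\<lambda>n. \<bar>a n\<bar>)"
  shows "summable (\<lambda>n. norm (a n *\<^sub>R (S ^^ n) x))"
proof (rule summable_comparison_test[where g="\<lambda>n. \<bar>a n\<bar> * norm x"])
  show "\<exists>N. \<forall>n\<ge>N. norm (norm (a n *\<^sub>R (S ^^ n) x)) \<le> \<bar>a n\<bar> * norm x"
    using funpow_contr_norm[OF assms(1)] by (auto intro!: mult_left_mono)
  show "summable (\<lambda>n. \<bar>a n\<bar> * norm x)" using assms(2) by (rule summable_mult2)
qed

lemma psf_summable: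
  assumes "contr S" "summable (\<lambda>n. \<bar>a n\<bar>)"
  shows "summable (\<lambda>n. a n *\<^sub>R (S ^^ n) x)"
  using psf_summable_norm[OF assms] by (rule summable_norm_cancel)

lemma psf_norm:
  assumes "contr S" "summable (\<lambda>n. \<bar>a n\<bar>)"
  shows "norm (psf a S x) \<le> (\<Sum>n. \<bar>a n\<bar>) * norm x"
proof -
  have "norm (psf a S x) \<le> (\<Sum>n. norm (a n *\<^sub>R (S ^^ n) x))"
    unfolding psf_def using psf_summable_norm[OF assms] by (rule summable_norm)
  also have "\<dots> \<le> (\<Sum>n. \<bar>a n\<bar> * norm x)"
    using funpow_contr_norm[OF assms(1)] psf_summable_norm[OF assms] summable_mult2[OF assms(2)]
    by (intro suminf_le) (auto intro!: mult_left_mono)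
  also have "\<dots> = (\<Sum>n. \<bar>a n\<bar>) * norm x" using assms(2) by (rule suminf_mult2[symmetric])
  finally show ?thesis .
qed

lemma bounded_linear_cinner_left: "bounded_linear (\<lambda>v. cinner v (y::'a::chilbert))"
proof (rule bounded_linear_intro[where K="norm y"])
  fix v show "norm (cinner v y) \<le> norm v * norm y" using CS[of v y] by simp
qed (auto simp: cinner_simps scaleR_conv_of_real)

lemma bounded_linear_cinner_right: "bounded_linear (\<lambda>v. cinner (y::'a::chilbert) v)"
proof (rule bounded_linear_intro[where K="norm y"])
  fix v show "norm (cinner y v) \<le> norm v * norm y" using CS[of y v] by (simp add: mult.commute)
qed (auto simp: cinner_simps scaleR_conv_of_real)

lemma bounded_linear_scaleC: "bounded_linear (\<lambda>v::'a::chilbert. scaleC c v)"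
  by (rule bounded_linear_intro[where K="cmod c"])
     (auto simp: scaleC_add_right norm_scaleC scaleR_scaleC scaleC_scaleC mult.commute)

lemma psf_bcl:
  assumes "contr S" "summable (\<lambda>n. \<bar>a n\<bar>)"
  shows "bounded_clinear (psf a S)"
  unfolding bounded_clinear_def
proof (intro conjI allI)
  have Sn: "bounded_clinear (S ^^ n)" for n using assms(1) funpow_bcl contr_def by blast
  fix x y show "psf a S (x + y) = psf a S x + psf a S y"
    unfolding psf_def
    by (simp add: suminf_add[OF psf_summable[OF assms] psf_summable[OF assms]] bclD[OF Sn] scaleR_add_right)
next
  have Sn: "bounded_clinear (S ^^ n)" for n using assms(1) funpow_bcl contr_def by blast
  fix c x show "psf a S (scaleC c x) = scaleC c (psf a S x)"
    unfolding psf_def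
    using bounded_linear.suminf[OF bounded_linear_scaleC psf_summable[OF assms], of c x]
    by (simp add: bclD[OF Sn] scaleR_scaleC scaleC_scaleC mult.commute)
next
  show "\<exists>K. \<forall>x. norm (psf a S x) \<le> norm x * K"
    using psf_norm[OF assms] by (metis mult.commute)
qed

lemma psf_cinner_left:
  assumes "contr S" "summable (\<lambda>n. \<bar>a n\<bar>)"
  shows "(\<lambda>n. of_real (a n) * cinner ((S ^^ n) x) y) sums cinner (psf a S x) y"
proof -
  have "(\<lambda>n. cinner (a n *\<^sub>R (S ^^ n) x) y) sums cinner (psf a S x) y"
    unfolding psf_def
    by (rule bounded_linear.sums[OF bounded_linear_cinner_left summable_sums[OF psf_summable[OF assms]]])
  then show ?thesis by (simp add: cinner_simps)
qed

lemma psf_selfadj: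
  assumes "contr S" "summable (\<lambda>n. \<bar>a n\<bar>)" "selfadj S"
  shows "selfadj (psf a S)"
  unfolding selfadj_def
proof (intro allI)
  fix x y
  have "(\<lambda>n. of_real (a n) * cinner ((S ^^ n) y) x) sums cinner (psf a S y) x"
    by (rule psf_cinner_left[OF assms(1,2)])
  then have "(\<lambda>n. cnj (of_real (a n) * cinner ((S ^^ n) y) x)) sums cnj (cinner (psf a S y) x)"
    by (rule sums_cnj[THEN iffD2])
  then have "(\<lambda>n. of_real (a n) * cinner ((S ^^ n) x) y) sums cinner x (psf a S y)"
    using funpow_selfadj[OF assms(3)]
    by (metis (no_types, lifting) cinner_commute complex_cnj_complex_of_real complex_cnj_mult sums_cong)
  then show "cinner (psf a S x) y = cinner x (psf a S y)"
    using psf_cinner_left[OF assms(1,2)] sums_unique2 by blast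
qed

lemma psf_commute:
  assumes "contr S1" "contr S2" "summable (\<lambda>n. \<bar>a n\<bar>)" "bounded_clinear B"
    and "\<And>x. B (S1 x) = S2 (B x)"
  shows "B (psf a S1 x) = psf a S2 (B x)"
proof -
  have Bn: "B ((S1 ^^ n) x) = (S2 ^^ n) (B x)" for n x
    by (induction n arbitrary: x) (auto simp: assms(5))
  have "B (psf a S1 x) = (\<Sum>n. B (a n *\<^sub>R (S1 ^^ n) x))"
    unfolding psf_def by (rule bounded_linear.suminf[OF bcl_bounded_linear[OF assms(4)] psf_summable[OF assms(1,3)]])
  also have "\<dots> = psf a S2 (B x)"
    unfolding psf_def by (simp add: bcl_simps[OF assms(4)] Bn)
  finally show ?thesis .
qed

lemma psf_finite:
  assumes "\<And>n. n \<ge> N \<Longrightarrow> a n = 0"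
  shows "psf a S x = (\<Sum>n<N. a n *\<^sub>R (S ^^ n) x)"
  unfolding psf_def
  by (rule suminf_finite) (auto simp: assms)

section \<open>Composition via the Cauchy product\<close>

definition BL :: "('a::chilbert \<Rightarrow> 'a) \<Rightarrow> nat \<Rightarrow> ('a \<Rightarrow>\<^sub>L 'a)" where
  "BL S n = Blinfun (S ^^ n)"

lemma BL_apply: "contr S \<Longrightarrow> blinfun_apply (BL S n) = S ^^ n"
  unfolding BL_def contr_def
  by (intro bounded_linear_Blinfun_apply bcl_bounded_linear funpow_bcl) auto

lemma BL_norm: "contr S \<Longrightarrow> norm (BL S n) \<le> 1"
  by (rule norm_blinfun_bound) (auto simp: BL_apply funpow_contr_norm)

lemma psf_comp:
  assumes S: "contr S" and a: "summable (\<lambda>n. \<bar>a n\<bar>)" and b: "summable (\<lambda>n. \<bar>b n\<bar>)"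
  shows "psf a S (psf b S x) = psf (conv a b) S x"
proof -
  define F where "F n = a n *\<^sub>R BL S n" for n
  define G where "G n = b n *\<^sub>R BL S n" for n
  have nF: "norm (F n) \<le> \<bar>a n\<bar>" for n
    unfolding F_def using BL_norm[OF S, of n] by (auto intro: mult_left_le)
  have nG: "norm (G n) \<le> \<bar>b n\<bar>" for n
    unfolding G_def using BL_norm[OF S, of n] by (auto intro: mult_left_le)
  have sF: "summable (\<lambda>n. norm (F n))"
    by (rule summable_comparison_test[OF _ a]) (auto simp: nF)
  have sG: "summable (\<lambda>n. norm (G n))"
    by (rule summable_comparison_test[OF _ b]) (auto simp: nG)
  have Sn: "bounded_clinear (S ^^ n)" for n using S funpow_bcl contr_def by blast
  have trm: "(\<Sum>i\<le>k. F i o\<^sub>L G (k - i)) = conv a b k *\<^sub>R BL S k" for k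
  proof (rule blinfun_eqI)
    fix v
    have "blinfun_apply (\<Sum>i\<le>k. F i o\<^sub>L G (k - i)) v = (\<Sum>i\<le>k. blinfun_apply (F i o\<^sub>L G (k - i)) v)"
      by (simp add: blinfun.sum_left)
    also have "\<dots> = (\<Sum>i\<le>k. (a i * b (k - i)) *\<^sub>R (S ^^ k) v)"
    proof (rule sum.cong)
      fix i assume "i \<in> {..k}"
      then have "(S ^^ i) ((S ^^ (k - i)) v) = (S ^^ k) v"
        by (metis comp_apply funpow_add le_add_diff_inverse atMost_iff)
      then show "blinfun_apply (F i o\<^sub>L G (k - i)) v = (a i * b (k - i)) *\<^sub>R (S ^^ k) v"
        by (simp add: F_def G_def BL_apply[OF S] bcl_simps[OF Sn] blinfun.scaleR_left)
    qed simp
    also have "\<dots> = blinfun_apply (conv a b k *\<^sub>R BL S k) v"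
      by (simp add: conv_def BL_apply[OF S] scaleR_sum_left blinfun.scaleR_left blinfun.sum_left)
    finally show "blinfun_apply (\<Sum>i\<le>k. F i o\<^sub>L G (k - i)) v = blinfun_apply (conv a b k *\<^sub>R BL S k) v" .
  qed
  have "(\<lambda>k. \<Sum>i\<le>k. F i o\<^sub>L G (k - i)) sums ((\<Sum>k. F k) o\<^sub>L (\<Sum>k. G k))"
    by (rule bounded_bilinear.Cauchy_product_sums_bil[OF bounded_bilinear_blinfun_compose sF
          summable_norm_cancel[OF sF] sG summable_norm_cancel[OF sG]])
  then have CP: "(\<lambda>k. conv a b k *\<^sub>R BL S k) sums ((\<Sum>k. F k) o\<^sub>L (\<Sum>k. G k))"
    by (simp add: trm)
  have app: "blinfun_apply (\<Sum>k. c k *\<^sub>R BL S k) v = psf c S v" if "summable (\<lambda>k. c k *\<^sub>R BL S k)" for c v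
  proof -
    have "blinfun_apply (\<Sum>k. c k *\<^sub>R BL S k) v = (\<Sum>k. blinfun_apply (c k *\<^sub>R BL S k) v)"
      by (rule bounded_linear.suminf[OF bounded_bilinear.bounded_linear_left[OF bounded_bilinear_blinfun_apply] that])
    then show ?thesis by (simp add: psf_def BL_apply[OF S] blinfun.scaleR_left)
  qed
  have "psf a S (psf b S x) = blinfun_apply ((\<Sum>k. F k) o\<^sub>L (\<Sum>k. G k)) x"
    using app[of a] app[of b] summable_norm_cancel[OF sF] summable_norm_cancel[OF sG]
    by (simp add: F_def G_def)
  also have "\<dots> = psf (conv a b) S x"
    using app[of "conv a b" x] CP by (simp add: sums_iff)
  finally show ?thesis .
qed




lemma pos_selfadj: "positive_op T \<Longrightarrow> selfadj T"
  unfolding selfadj_def using positive_selfadj by blast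

lemma pos_bcl: "positive_op T \<Longrightarrow> bounded_clinear T"
  unfolding positive_op_def by blast

lemma pos_Re: "positive_op T \<Longrightarrow> 0 \<le> Re (cinner (T x) x)"
  unfolding positive_op_def by blast

lemma selfadj_Im: "selfadj T \<Longrightarrow> Im (cinner (T x) x) = 0"
proof -
  assume "selfadj T"
  then have "cinner (T x) x = cnj (cinner (T x) x)" unfolding selfadj_def by (metis cinner_commute)
  then have "Im (cinner (T x) x) = Im (cnj (cinner (T x) x))" by (rule arg_cong)
  then show ?thesis by simp
qed

lemma qform_norm:
  assumes S: "bounded_clinear S" "selfadj S" and c: "c \<ge> 0"
    and q: "\<And>x. \<bar>Re (cinner (S x) x)\<bar> \<le> c * (norm x)^2"
  shows "norm (S x) \<le> c * norm x"
proof (cases "S x = 0 \<or> x = 0")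
  case True then show ?thesis using bcl_simps(1)[OF S(1)] c by auto
next
  case False
  then have Sx: "norm (S x) > 0" and x: "norm x > 0" by auto
  define r where "r = norm x / norm (S x)"
  define y where "y = r *\<^sub>R S x"
  have r: "r > 0" using Sx x by (simp add: r_def)
  have ny: "norm y = norm x" using r Sx by (simp add: y_def r_def)
  have "cinner (S y) x = cnj (cinner (S x) y)"
    using S(2) unfolding selfadj_def by (metis cinner_commute)
  then have "Re (cinner (S y) x) = Re (cinner (S x) y)" by simp
  then have "Re (cinner (S (x + y)) (x + y)) - Re (cinner (S (x - y)) (x - y)) = 4 * Re (cinner (S x) y)"
    by (simp add: bclD[OF S(1)] bcl_simps[OF S(1)] cinner_simps)
  also have "Re (cinner (S x) y) = r * (norm (S x))^2"
    by (simp add: y_def cinner_simps cinner_self)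
  also have "r * (norm (S x))^2 = norm x * norm (S x)"
    using Sx by (simp add: r_def power2_eq_square)
  finally have "4 * (norm x * norm (S x)) \<le> c * (norm (x + y))^2 + c * (norm (x - y))^2"
    using q[of "x + y"] q[of "x - y"] by linarith
  also have "\<dots> = c * (2 * (norm x)^2 + 2 * (norm y)^2)"
    using parallelogram[of x y] by (metis distrib_left)
  also have "\<dots> = 4 * (norm x * (c * norm x))" by (simp add: ny power2_eq_square)
  finally show ?thesis using x by simp
qed

lemma pos_le_bound:
  assumes "positive_op T" "\<And>x. norm (T x) \<le> lam * norm x"
  shows "Re (cinner (T x) x) \<le> lam * (norm x)^2"
proof -
  have "Re (cinner (T x) x) \<le> cmod (cinner (T x) x)" by (rule complex_Re_le_cmod)
  also have "\<dots> \<le> norm (T x) * norm x" by (rule CS)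
  also have "\<dots> \<le> lam * norm x * norm x" using assms(2) by (intro mult_right_mono) auto
  finally show ?thesis by (simp add: power2_eq_square mult_ac)
qed

definition sqS :: "real \<Rightarrow> ('a::chilbert \<Rightarrow> 'a) \<Rightarrow> 'a \<Rightarrow> 'a" where
  "sqS lam T x = x - (1 / lam) *\<^sub>R T x"

lemma sqS_props:
  assumes T: "positive_op T" and lam: "lam > 0" and bd: "\<And>x. norm (T x) \<le> lam * norm x"
  shows "contr (sqS lam T)" "selfadj (sqS lam T)"
proof -
  have bcl: "bounded_clinear (sqS lam T)"
    unfolding sqS_def[abs_def] by (intro bcl_diff bcl_id bcl_scaleR pos_bcl T)
  show sa: "selfadj (sqS lam T)"
    using pos_selfadj[OF T] unfolding selfadj_def sqS_def by (simp add: cinner_simps)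
  have "\<bar>Re (cinner (sqS lam T x) x)\<bar> \<le> 1 * (norm x)^2" for x
  proof -
    have e: "Re (cinner (sqS lam T x) x) = (norm x)^2 - (1/lam) * Re (cinner (T x) x)"
      by (simp add: sqS_def cinner_simps cinner_self)
    have "0 \<le> Re (cinner (T x) x)" by (rule pos_Re[OF T])
    moreover have "(1/lam) * Re (cinner (T x) x) \<le> (1/lam) * (lam * (norm x)^2)"
      using pos_le_bound[OF T bd] lam by (intro mult_left_mono) auto
    ultimately show ?thesis unfolding e using lam by (simp add: abs_le_iff)
  qed
  then have "norm (sqS lam T x) \<le> 1 * norm x" for x
    by (intro qform_norm[OF bcl sa]) auto
  then show "contr (sqS lam T)" using bcl unfolding contr_def by simp
qed

definition sqR :: "real \<Rightarrow> ('a::chilbert \<Rightarrow> 'a) \<Rightarrow> 'a \<Rightarrow> 'a" where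
  "sqR lam T x = sqrt lam *\<^sub>R psf bco (sqS lam T) x"

lemma psf_bco_sq:
  assumes "contr S"
  shows "psf bco S (psf bco S x) = x - S x"
proof -
  have "psf bco S (psf bco S x) = psf (conv bco bco) S x"
    by (rule psf_comp[OF assms bco_summable bco_summable])
  also have "\<dots> = (\<Sum>n<2. conv bco bco n *\<^sub>R (S ^^ n) x)"
    by (rule psf_finite) (simp add: conv_def bco_conv)
  also have "\<dots> = x - S x"
    by (simp add: conv_def bco_conv numeral_2_eq_2)
  finally show ?thesis .
qed

lemma sqR_props:
  assumes T: "positive_op T" and lam: "lam > 0" and bd: "\<And>x. norm (T x) \<le> lam * norm x"
  shows "positive_op (sqR lam T)" "\<And>x. sqR lam T (sqR lam T x) = T x"
proof -
  note S = sqS_props[OF assms]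
  have pbcl: "bounded_clinear (psf bco (sqS lam T))" by (rule psf_bcl[OF S(1) bco_summable])
  have bcl: "bounded_clinear (sqR lam T)" unfolding sqR_def[abs_def] by (intro bcl_scaleR pbcl)
  show "sqR lam T (sqR lam T x) = T x" for x
  proof -
    have "sqR lam T (sqR lam T x) = (sqrt lam * sqrt lam) *\<^sub>R psf bco (sqS lam T) (psf bco (sqS lam T) x)"
      by (simp add: sqR_def bcl_simps[OF pbcl])
    also have "\<dots> = lam *\<^sub>R (x - sqS lam T x)"
      using lam by (simp add: psf_bco_sq[OF S(1)])
    also have "\<dots> = T x" using lam by (simp add: sqS_def)
    finally show ?thesis .
  qed
  have psa: "selfadj (psf bco (sqS lam T))" by (rule psf_selfadj[OF S(1) bco_summable S(2)])
  have "0 \<le> Re (cinner (psf bco (sqS lam T) x) x)" for x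
  proof -
    let ?S = "sqS lam T"
    have "(\<lambda>n. of_real (bco n) * cinner ((?S ^^ n) x) x) sums cinner (psf bco ?S x) x"
      by (rule psf_cinner_left[OF S(1) bco_summable])
    then have "(\<lambda>n. Re (of_real (bco n) * cinner ((?S ^^ n) x) x)) sums Re (cinner (psf bco ?S x) x)"
      by (rule sums_Re)
    then have s1: "(\<lambda>n. bco n * Re (cinner ((?S ^^ n) x) x)) sums Re (cinner (psf bco ?S x) x)"
      by simp
    have s2: "(\<lambda>n. bco n * (norm x)^2) sums (suminf bco * (norm x)^2)"
      by (rule sums_mult2[OF summable_sums[OF bco_summable']])
    have "bco n * (norm x)^2 \<le> bco n * Re (cinner ((?S ^^ n) x) x)" for n
    proof (cases "n = 0")
      case True then show ?thesis by (simp add: Re_cinner_self)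
    next
      case False
      have "Re (cinner ((?S ^^ n) x) x) \<le> cmod (cinner ((?S ^^ n) x) x)" by (rule complex_Re_le_cmod)
      also have "\<dots> \<le> norm ((?S ^^ n) x) * norm x" by (rule CS)
      also have "\<dots> \<le> norm x * norm x" using funpow_contr_norm[OF S(1)] by (intro mult_right_mono) auto
      finally show ?thesis using bco_nonpos[of n] False
        by (intro mult_left_mono_neg) (auto simp: power2_eq_square)
    qed
    then have "suminf bco * (norm x)^2 \<le> Re (cinner (psf bco ?S x) x)"
      by (rule sums_le[OF _ s2 s1])
    moreover have "0 \<le> suminf bco * (norm x)^2" using bco_suminf_nonneg by simp
    ultimately show ?thesis by linarith
  qed
  moreover have "cinner (sqR lam T x) x = of_real (sqrt lam) * cinner (psf bco (sqS lam T) x) x" for x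
    by (simp add: sqR_def cinner_scaleR_left)
  ultimately show "positive_op (sqR lam T)"
    unfolding positive_op_def using bcl selfadj_Im[OF psa] lam
    by simp
qed

lemma sqrt_unique_aux:
  assumes R: "positive_op R" and R': "positive_op R'"
    and sq: "\<And>x. R (R x) = R' (R' x)" and cm: "\<And>x. R (R' x) = R' (R x)"
  shows "R = R'"
proof
  fix x
  have Rb: "bounded_clinear R" and R'b: "bounded_clinear R'" using R R' by (auto intro: pos_bcl)
  define D where "D v = R v - R' v" for v
  have Db: "bounded_clinear D" unfolding D_def[abs_def] by (intro bcl_diff Rb R'b)
  have kill: "P y = 0" if P: "positive_op P" and "Re (cinner (P y) y) = 0" for P y
  proof -
    have "(cmod (cinner (P y) (P y)))^2 \<le> Re (cinner (P y) y) * Re (cinner (P (P y)) (P y))"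
      by (rule positive_CS[OF P])
    then have "cmod (cinner (P y) (P y)) = 0" using that by simp
    then show ?thesis by (simp add: cinner_self_eq_zero)
  qed
  have DD: "D (D x) = 0"
  proof -
    let ?y = "D x"
    have "R ?y + R' ?y = 0"
      by (simp add: D_def bcl_simps[OF Rb] bcl_simps[OF R'b] sq cm)
    then have "cinner (R ?y) ?y + cinner (R' ?y) ?y = 0"
      by (metis cinner_add_left cinner_zero_left)
    then have "Re (cinner (R ?y) ?y) + Re (cinner (R' ?y) ?y) = 0" by (metis plus_complex.sel(1) zero_complex.sel(1))
    then have "Re (cinner (R ?y) ?y) = 0" "Re (cinner (R' ?y) ?y) = 0"
      using pos_Re[OF R, of ?y] pos_Re[OF R', of ?y] by linarith+
    then have "R ?y = 0" "R' ?y = 0" using kill R R' by blast+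
    then show ?thesis by (simp add: D_def)
  qed
  have "cinner (D x) (D x) = cinner (D (D x)) x"
    using pos_selfadj[OF R] pos_selfadj[OF R']
    by (simp add: D_def selfadj_def cinner_simps bcl_simps[OF Rb] bcl_simps[OF R'b])
  then have "cinner (D x) (D x) = 0" using DD by simp
  then show "R x = R' x" by (simp add: cinner_self_eq_zero D_def)
qed

lemma sqrt_op_eq:
  assumes T: "positive_op T" and lam: "lam > 0" and bd: "\<And>x. norm (T x) \<le> lam * norm x"
  shows "sqrt_op T = sqR lam T"
proof -
  note RP = sqR_props[OF assms]
  note S = sqS_props[OF assms]
  have uniq: "R' = sqR lam T" if R': "positive_op R'" "R' \<circ> R' = T" for R'
  proof (rule sym, rule sqrt_unique_aux[OF RP(1) R'(1)])
    have sq': "R' (R' x) = T x" for x using R'(2) by (metis comp_apply)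
    show "sqR lam T (sqR lam T x) = R' (R' x)" for x by (simp add: RP(2) sq')
    have R'b: "bounded_clinear R'" using R'(1) by (rule pos_bcl)
    have cT: "R' (T x) = T (R' x)" for x by (simp add: sq'[symmetric])
    have cS: "R' (sqS lam T x) = sqS lam T (R' x)" for x
      by (simp add: sqS_def bcl_simps[OF R'b] cT)
    show "sqR lam T (R' x) = R' (sqR lam T x)" for x
      using psf_commute[OF S(1) S(1) bco_summable R'b cS]
      by (simp add: sqR_def bcl_simps[OF R'b])
  qed
  have "positive_op (sqR lam T) \<and> sqR lam T \<circ> sqR lam T = T"
    using RP by (auto simp: comp_def)
  then show ?thesis unfolding sqrt_op_def
    using uniq by (intro the_equality) auto
qed

lemma sqrt_op_props:
  assumes T: "positive_op T"
  shows "positive_op (sqrt_op T)" "\<And>x. sqrt_op T (sqrt_op T x) = T x"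
proof -
  obtain K where K: "K > 0" "\<And>x. norm (T x) \<le> norm x * K" using bcl_bound[OF pos_bcl[OF T]] by metis
  have bd: "norm (T x) \<le> K * norm x" for x using K(2) by (simp add: mult.commute)
  show "positive_op (sqrt_op T)" "\<And>x. sqrt_op T (sqrt_op T x) = T x"
    using sqR_props[OF T K(1) bd] sqrt_op_eq[OF T K(1) bd] by auto
qed

lemma sqrt_op_intertwine:
  assumes T1: "positive_op T1" and T2: "positive_op T2" and lam: "lam > 0"
    and bd1: "\<And>x. norm (T1 x) \<le> lam * norm x" and bd2: "\<And>x. norm (T2 x) \<le> lam * norm x"
    and A: "bounded_clinear A" and cm: "\<And>x. A (T1 x) = T2 (A x)"
  shows "A (sqrt_op T1 x) = sqrt_op T2 (A x)"
proof -
  have cS: "A (sqS lam T1 x) = sqS lam T2 (A x)" for x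
    by (simp add: sqS_def bcl_simps[OF A] cm)
  show ?thesis
    unfolding sqrt_op_eq[OF T1 lam bd1] sqrt_op_eq[OF T2 lam bd2] sqR_def
    using psf_commute[OF sqS_props(1)[OF T1 lam bd1] sqS_props(1)[OF T2 lam bd2] bco_summable A cS]
    by (simp add: bcl_simps[OF A])
qed




lemma shift_inverse:
  assumes P: "positive_op P" and M: "M > 0" and bd: "\<And>x. norm (P x) \<le> M * norm x" and e: "e > 0"
  shows "\<exists>K. positive_op K \<and> (\<forall>x. K (P x + e *\<^sub>R x) = x) \<and> (\<forall>x. P (K x) + e *\<^sub>R K x = x)
          \<and> (\<forall>x. K (P x) = P (K x))"
proof -
  define S where "S = sqS M P"
  note SP = sqS_props[OF P M bd, folded S_def]
  have Sb: "bounded_clinear S" using SP(1) contr_def by blast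
  define r where "r = M / (M + e)"
  have r: "0 \<le> r" "r < 1" using M e by (auto simp: r_def)
  define g :: "nat \<Rightarrow> real" where "g n = r ^ n" for n
  define d :: "nat \<Rightarrow> real" where "d n = (if n = 0 then 1 else if n = 1 then - r else 0)" for n
  have gs: "summable (\<lambda>n. \<bar>g n\<bar>)"
    using r by (simp add: g_def summable_geometric)
  have ds: "summable (\<lambda>n. \<bar>d n\<bar>)"
    by (rule summable_finite[where N="{0,1}"]) (auto simp: d_def)
  have pd: "psf d S y = y - r *\<^sub>R S y" for y
  proof -
    have "psf d S y = (\<Sum>n<2. d n *\<^sub>R (S ^^ n) y)" by (rule psf_finite) (simp add: d_def)
    then show ?thesis by (simp add: d_def numeral_2_eq_2)
  qed
  have cdg: "conv d g k = (if k = 0 then 1 else 0)" for k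
  proof (cases k)
    case 0 then show ?thesis by (simp add: conv_def d_def g_def)
  next
    case (Suc m)
    have "conv d g k = d 0 * g (Suc m) + (\<Sum>i\<le>m. d (Suc i) * g (Suc m - Suc i))"
      unfolding conv_def Suc by (subst sum.atMost_Suc_shift) simp
    also have "(\<Sum>i\<le>m. d (Suc i) * g (Suc m - Suc i)) = d 1 * g m"
    proof (cases m)
      case 0 then show ?thesis by simp
    next
      case (Suc m')
      have "(\<Sum>i\<le>m. d (Suc i) * g (Suc m - Suc i)) = d 1 * g m + (\<Sum>i\<le>m'. d (Suc (Suc i)) * g (m - Suc i))"
        unfolding Suc by (subst sum.atMost_Suc_shift) simp
      also have "(\<Sum>i\<le>m'. d (Suc (Suc i)) * g (m - Suc i)) = 0" by (simp add: d_def)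
      finally show ?thesis by simp
    qed
    finally have "conv d g k = d 0 * g (Suc m) + d 1 * g m" .
    moreover have "d 0 * g (Suc m) + d 1 * g m = 0" by (simp add: d_def g_def)
    ultimately show ?thesis using Suc by simp
  qed
  have pdelta: "psf (conv d g) S y = y" for y
  proof -
    have "psf (conv d g) S y = (\<Sum>n<1. conv d g n *\<^sub>R (S ^^ n) y)" by (rule psf_finite) (simp add: cdg)
    then show ?thesis by (simp add: cdg)
  qed
  have dg: "psf d S (psf g S y) = y" for y
    using psf_comp[OF SP(1) ds gs] pdelta by simp
  have gbcl: "bounded_clinear (psf g S)" by (rule psf_bcl[OF SP(1) gs])
  have gS: "S (psf g S y) = psf g S (S y)" for y
    by (rule psf_commute[OF SP(1) SP(1) gs Sb]) simp
  have gd: "psf g S (psf d S y) = y" for y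
    using dg[of y] by (simp add: pd bcl_simps[OF gbcl] gS)
  have pe: "P x + e *\<^sub>R x = (M + e) *\<^sub>R psf d S x" for x
  proof -
    have "(M + e) *\<^sub>R psf d S x = (M + e) *\<^sub>R x - ((M + e) * r) *\<^sub>R x + ((M + e) * r / M) *\<^sub>R P x"
      unfolding pd by (simp add: S_def sqS_def algebra_simps)
    also have "(M + e) * r = M" using M e by (simp add: r_def)
    finally show ?thesis using M by (simp add: algebra_simps)
  qed
  define K where "K x = (1 / (M + e)) *\<^sub>R psf g S x" for x
  have Kb: "bounded_clinear K" unfolding K_def[abs_def] by (intro bcl_scaleR gbcl)
  have K1: "K (P x + e *\<^sub>R x) = x" for x
    using M e by (simp add: pe K_def bcl_simps[OF gbcl] gd)
  have K2: "P (K x) + e *\<^sub>R K x = x" for x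
  proof -
    have pdb: "bounded_clinear (psf d S)" by (rule psf_bcl[OF SP(1) ds])
    show ?thesis using M e unfolding pe by (simp add: K_def bcl_simps[OF pdb] dg)
  qed
  have Pb: "bounded_clinear P" by (rule pos_bcl[OF P])
  have PS: "P (S x) = S (P x)" for x by (simp add: S_def sqS_def bcl_simps[OF Pb])
  have KP: "K (P x) = P (K x)" for x
    using psf_commute[OF SP(1) SP(1) gs Pb PS, of x] by (simp add: K_def bcl_simps[OF Pb])
  have Ksa: "selfadj K"
    using psf_selfadj[OF SP(1) gs SP(2)] by (simp add: selfadj_def K_def cinner_simps)
  have "0 \<le> Re (cinner (K z) z)" for z
  proof -
    define w where "w = K z"
    have z: "z = P w + e *\<^sub>R w" using K2[of z] by (simp add: w_def)
    have "cinner (K z) z = cinner w (P w) + of_real e * of_real ((norm w)^2)"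
      by (simp add: z[symmetric] w_def[symmetric]) (simp add: z cinner_simps cinner_self)
    moreover have "cinner w (P w) = cnj (cinner (P w) w)" by (rule cinner_commute)
    then have "Re (cinner w (P w)) = Re (cinner (P w) w)" by simp
    ultimately show ?thesis using pos_Re[OF P, of w] e by simp
  qed
  then have "positive_op K" unfolding positive_op_def using Kb selfadj_Im[OF Ksa] by simp
  then show ?thesis using K1 K2 KP by blast
qed

lemma abs_op_facts:
  assumes A: "bounded_clinear A"
  shows "positive_op (abs_op A)" "positive_op (abs_op (adj A))"
    "\<And>x. abs_op A (abs_op A x) = adj A (A x)"
    "\<And>x. abs_op (adj A) (abs_op (adj A) x) = A (adj A x)"
    "\<And>x. A (abs_op A x) = abs_op (adj A) (A x)"
proof -
  define B where "B = adj A"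
  have Bb: "bounded_clinear B" unfolding B_def by (rule adj_props(1)[OF A])
  have BA: "cinner (B x) y = cinner x (A y)" for x y unfolding B_def by (rule adj_left[OF A])
  have AB: "cinner (A x) y = cinner x (B y)" for x y unfolding B_def by (rule adj_props(2)[OF A])
  have T1: "positive_op (B \<circ> A)"
    unfolding positive_op_def using bcl_comp[OF Bb A]
    by (simp add: BA cinner_self cinner_self_real)
  have T2: "positive_op (A \<circ> B)"
    unfolding positive_op_def using bcl_comp[OF A Bb]
    by (simp add: AB cinner_self cinner_self_real)
  obtain KA where KA: "KA > 0" "\<And>x. norm (A x) \<le> norm x * KA" using bcl_bound[OF A] by metis
  obtain KB where KB: "KB > 0" "\<And>x. norm (B x) \<le> norm x * KB" using bcl_bound[OF Bb] by metis
  have bd1: "norm ((B \<circ> A) x) \<le> (KA * KB) * norm x" for x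
  proof -
    have "norm (B (A x)) \<le> norm (A x) * KB" by (rule KB(2))
    also have "\<dots> \<le> (norm x * KA) * KB" using KA(2) KB(1) by (intro mult_right_mono) auto
    finally show ?thesis by (simp add: mult_ac)
  qed
  have bd2: "norm ((A \<circ> B) x) \<le> (KA * KB) * norm x" for x
  proof -
    have "norm (A (B x)) \<le> norm (B x) * KA" by (rule KA(2))
    also have "\<dots> \<le> (norm x * KB) * KA" using KB(2) KA(1) by (intro mult_right_mono) auto
    finally show ?thesis by (simp add: mult_ac)
  qed
  have lam: "KA * KB > 0" using KA KB by simp
  have eqP: "abs_op A = sqrt_op (B \<circ> A)" by (simp add: abs_op_def B_def)
  have eqQ: "abs_op (adj A) = sqrt_op (A \<circ> B)" by (simp add: abs_op_def B_def adj_adj[OF A])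
  show "positive_op (abs_op A)" "positive_op (abs_op (adj A))"
    unfolding eqP eqQ using sqrt_op_props(1) T1 T2 by auto
  show "abs_op A (abs_op A x) = adj A (A x)" for x
    unfolding eqP using sqrt_op_props(2)[OF T1] by (simp add: B_def)
  show "abs_op (adj A) (abs_op (adj A) x) = A (adj A x)" for x
    unfolding eqQ using sqrt_op_props(2)[OF T2] by (simp add: B_def)
  show "A (abs_op A x) = abs_op (adj A) (A x)" for x
    unfolding eqP eqQ by (rule sqrt_op_intertwine[OF T1 T2 lam bd1 bd2 A]) simp
qed

lemma mixed_CS_eps:
  assumes A: "bounded_clinear A" and e: "e > 0"
  shows "(cmod (cinner (A x) y))^2 \<le>
     (Re (cinner (abs_op A x) x) + e * (norm x)^2) * Re (cinner (abs_op (adj A) y) y)"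
proof -
  define P where "P = abs_op A"
  define Q where "Q = abs_op (adj A)"
  define B where "B = adj A"
  note F = abs_op_facts[OF A, folded P_def Q_def B_def]
  have Bb: "bounded_clinear B" unfolding B_def by (rule adj_props(1)[OF A])
  have AB: "cinner (A x) y = cinner x (B y)" for x y unfolding B_def by (rule adj_props(2)[OF A])
  have Pb: "bounded_clinear P" and Qb: "bounded_clinear Q" using F pos_bcl by auto
  obtain MP where MP: "MP > 0" "\<And>x. norm (P x) \<le> norm x * MP" using bcl_bound[OF Pb] by metis
  obtain MQ where MQ: "MQ > 0" "\<And>x. norm (Q x) \<le> norm x * MQ" using bcl_bound[OF Qb] by metis
  obtain KP where KP: "positive_op KP" "\<And>x. KP (P x + e *\<^sub>R x) = x" "\<And>x. P (KP x) + e *\<^sub>R KP x = x"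
    using shift_inverse[OF F(1) MP(1) _ e] MP(2) by (metis mult.commute)
  obtain KQ where KQ: "positive_op KQ" "\<And>x. KQ (Q x + e *\<^sub>R x) = x" "\<And>x. Q (KQ x) + e *\<^sub>R KQ x = x"
      "\<And>x. KQ (Q x) = Q (KQ x)"
    using shift_inverse[OF F(2) MQ(1) _ e] MQ(2) by (metis mult.commute)
  have AK: "A (KP v) = KQ (A v)" for v
  proof -
    have "A v = A (P (KP v) + e *\<^sub>R KP v)" by (simp add: KP(3))
    also have "\<dots> = Q (A (KP v)) + e *\<^sub>R A (KP v)" by (simp add: bclD[OF A] bcl_simps[OF A] F(5))
    finally have "KQ (A v) = KQ (Q (A (KP v)) + e *\<^sub>R A (KP v))" by simp
    then show ?thesis by (simp add: KQ(2))
  qed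
  define u where "u = P x + e *\<^sub>R x"
  define v where "v = B y"
  have "cinner (A x) y = cinner (KP u) v" by (simp add: u_def v_def KP(2) AB)
  then have "(cmod (cinner (A x) y))^2 \<le> Re (cinner (KP u) u) * Re (cinner (KP v) v)"
    using positive_CS[OF KP(1)] by simp
  also have "Re (cinner (KP u) u) = Re (cinner (P x) x) + e * (norm x)^2"
  proof -
    have "cinner (KP u) u = cinner x (P x) + of_real e * of_real ((norm x)^2)"
      by (simp add: u_def KP(2) cinner_simps cinner_self)
    moreover have "cinner x (P x) = cnj (cinner (P x) x)" by (rule cinner_commute)
    ultimately show ?thesis by simp
  qed
  also have "Re (cinner (KP v) v) \<le> Re (cinner (Q y) y)"
  proof -
    have Kb: "bounded_clinear KQ" using KQ(1) by (rule pos_bcl)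
    define w where "w = KQ y"
    have yw: "y = Q w + e *\<^sub>R w" using KQ(3)[of y] by (simp add: w_def)
    have "cinner (KP v) v = cinner (A (KP (B y))) y" by (simp add: v_def AB)
    also have "\<dots> = cinner (KQ (A (B y))) y" by (simp add: AK)
    also have "A (B y) = Q (Q y)" by (simp add: F(4) B_def)
    also have "KQ (Q (Q y)) = Q (Q w)" by (simp add: KQ(4) w_def)
    finally have lhs: "cinner (KP v) v = cinner (Q (Q w)) (Q w) + of_real e * cinner (Q (Q w)) w"
      by (simp add: yw cinner_simps)
    have qqw: "cinner (Q (Q w)) w = of_real ((norm (Q w))^2)"
    proof -
      have "cinner (Q (Q w)) w = cinner (Q w) (Q w)" using pos_selfadj[OF F(2)] by (simp add: selfadj_def)
      then show ?thesis by (simp add: cinner_self)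
    qed
    have rhs: "cinner (Q y) y = cinner (Q (Q w)) (Q w) + of_real e * cinner (Q (Q w)) w
        + of_real e * of_real ((norm (Q w))^2) + of_real e * of_real e * cinner (Q w) w"
      by (simp add: yw bclD[OF Qb] bcl_simps[OF Qb] cinner_simps cinner_self algebra_simps)
    have "0 \<le> e * (norm (Q w))^2 + e * e * Re (cinner (Q w) w)"
      using e pos_Re[OF F(2), of w] by simp
    then show ?thesis unfolding lhs rhs by simp
  qed
  moreover have "0 \<le> Re (cinner (KP v) v)" by (rule pos_Re[OF KP(1)])
  moreover have "0 \<le> Re (cinner (P x) x) + e * (norm x)^2" using pos_Re[OF F(1), of x] e by simp
  ultimately show ?thesis unfolding P_def Q_def
    by (metis (no_types, lifting) mult_left_mono order_trans P_def Q_def)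
qed

lemma mixed_CS:
  assumes A: "bounded_clinear A"
  shows "(cmod (cinner (A x) y))^2 \<le> Re (cinner (abs_op A x) x) * Re (cinner (abs_op (adj A) y) y)"
proof (rule field_le_epsilon)
  fix t :: real assume t: "0 < t"
  define q where "q = Re (cinner (abs_op (adj A) y) y)"
  have q: "0 \<le> q" unfolding q_def using abs_op_facts(2)[OF A] by (rule pos_Re)
  define e where "e = t / (((norm x)^2 + 1) * (q + 1))"
  have "((norm x)^2 + 1) * (q + 1) > 0" using q by (intro mult_pos_pos) (auto intro: add_nonneg_pos)
  then have e: "e > 0" using t by (simp add: e_def)
  have "(cmod (cinner (A x) y))^2 \<le> (Re (cinner (abs_op A x) x) + e * (norm x)^2) * q"
    unfolding q_def by (rule mixed_CS_eps[OF A e])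
  also have "\<dots> = Re (cinner (abs_op A x) x) * q + e * ((norm x)^2 * q)" by (simp add: algebra_simps)
  also have "e * ((norm x)^2 * q) \<le> t"
  proof -
    have "(norm x)^2 * q \<le> ((norm x)^2 + 1) * (q + 1)" using q by (simp add: algebra_simps)
    then have "e * ((norm x)^2 * q) \<le> e * (((norm x)^2 + 1) * (q + 1))" using e by (intro mult_left_mono) auto
    also have "\<dots> = t" using \<open>((norm x)^2 + 1) * (q + 1) > 0\<close> unfolding e_def
      by (metis less_irrefl nonzero_divide_eq_eq mult.commute)
    finally show ?thesis .
  qed
  finally show "(cmod (cinner (A x) y))^2 \<le> Re (cinner (abs_op A x) x) * Re (cinner (abs_op (adj A) y) y) + t"
    by (simp add: q_def)
qed




lemma numrad_bdd:
  assumes "bounded_clinear T"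
  shows "bdd_above (insert 0 {cmod (cinner (T x) x) | x. norm x = 1})"
proof -
  obtain K where K: "K > 0" "\<And>x. norm (T x) \<le> norm x * K" using bcl_bound[OF assms] by metis
  have "cmod (cinner (T x) x) \<le> K" if "norm x = 1" for x
  proof -
    have "cmod (cinner (T x) x) \<le> norm (T x) * norm x" by (rule CS)
    also have "\<dots> \<le> K" using K(2)[of x] that by simp
    finally show ?thesis .
  qed
  then show ?thesis using K(1) by (auto intro!: bdd_aboveI[of _ K])
qed

lemma numrad_ge:
  assumes "bounded_clinear T" "norm x = 1"
  shows "cmod (cinner (T x) x) \<le> numrad T"
  unfolding numrad_def using assms(2) by (intro cSup_upper numrad_bdd[OF assms(1)]) auto

lemma numrad_nonneg:
  assumes "bounded_clinear T"
  shows "0 \<le> numrad T"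
  unfolding numrad_def by (intro cSup_upper numrad_bdd[OF assms(1)]) auto

lemma numrad_le:
  assumes "\<And>x. norm x = 1 \<Longrightarrow> cmod (cinner (T x) x) \<le> c" "0 \<le> c"
  shows "numrad T \<le> c"
  unfolding numrad_def using assms by (intro cSup_least) auto

lemma buzano:
  assumes e: "norm e = 1"
  shows "2 * cmod (cinner u e * cinner e v) \<le> norm u * norm v + cmod (cinner u (v::'a::chilbert))"
proof -
  define c where "c = cinner e v"
  define v' where "v' = scaleC (2 * c) e - v"
  have ee: "cinner e e = 1" using e by (simp add: cinner_self)
  have ve: "cinner v e = cnj c" by (simp add: c_def cinner_commute[of v e])
  have "cinner v' v' = (cnj (2 * c) * (2 * c)) * cinner e e - cnj (2 * c) * cinner e v - (2 * c) * cinner v e + cinner v v"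
    by (simp add: v'_def cinner_simps algebra_simps)
  also have "\<dots> = cinner v v"
    using cnj_mult_self[of c] mult_cnj_self[of c] by (simp add: ee ve c_def[symmetric] algebra_simps)
  finally have "(norm v')^2 = (norm v)^2" by (metis Re_cinner_self)
  then have nv: "norm v' = norm v" by (simp add: power2_eq_iff_nonneg)
  have "cinner u v' = 2 * (cinner u e * c) - cinner u v"
    by (simp add: v'_def cinner_simps mult_ac)
  then have "cmod (2 * (cinner u e * c) - cinner u v) \<le> norm u * norm v"
    using CS[of u v'] nv by simp
  moreover have "cmod (2 * (cinner u e * c)) \<le> cmod (2 * (cinner u e * c) - cinner u v) + cmod (cinner u v)"
    using norm_triangle_ineq[of "2 * (cinner u e * c) - cinner u v" "cinner u v"] by simp
  ultimately show ?thesis by (simp add: c_def norm_mult)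
qed

lemma lin_aux:
  fixes p s y z w :: real
  shows "p \<le> s / 4 + p / 2 \<Longrightarrow> p / 2 \<le> y / 8 + z / 4 \<Longrightarrow> s \<le> w \<Longrightarrow> p \<le> w / 4 + y / 8 + z / 4"
  by linarith

theorem mainTheorem1:
  fixes A :: "'a::chilbert \<Rightarrow> 'a"
  assumes "bounded_clinear A"
  shows "(numrad A)\<^sup>2 \<le>
           1/4 * (numrad (\<lambda>x. abs_op A x + scaleC \<i> (abs_op (adj A) x)))\<^sup>2
         + 1/8 * onorm (\<lambda>x. abs_op A (abs_op A x) + abs_op (adj A) (abs_op (adj A) x))
         + 1/4 * numrad (abs_op A \<circ> abs_op (adj A))"
proof -
  note A = assms
  define P where "P = abs_op A"
  define Q where "Q = abs_op (adj A)"
  note F = abs_op_facts[OF A, folded P_def Q_def]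
  have Pb: "bounded_clinear P" and Qb: "bounded_clinear Q" using F pos_bcl by auto
  define W where "W = (\<lambda>x. P x + scaleC \<i> (Q x))"
  define G where "G = (\<lambda>x. P (P x) + Q (Q x))"
  have Wb: "bounded_clinear W" unfolding W_def by (intro bcl_add Pb bcl_scale Qb)
  have Gb: "bounded_clinear G" unfolding G_def
    by (intro bcl_add) (auto intro: bcl_comp[OF Pb Pb, unfolded comp_def] bcl_comp[OF Qb Qb, unfolded comp_def])
  have PQb: "bounded_clinear (P \<circ> Q)" by (rule bcl_comp[OF Pb Qb])
  define RHS where "RHS = 1/4 * (numrad W)\<^sup>2 + 1/8 * onorm G + 1/4 * numrad (P \<circ> Q)"
  have key: "(cmod (cinner (A x) x))^2 \<le> RHS" if x: "norm x = 1" for x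
  proof -
    define a where "a = Re (cinner (P x) x)"
    define b where "b = Re (cinner (Q x) x)"
    have a0: "0 \<le> a" unfolding a_def by (rule pos_Re[OF F(1)])
    have b0: "0 \<le> b" unfolding b_def by (rule pos_Re[OF F(2)])
    have Pa: "cinner (P x) x = of_real a"
      using selfadj_Im[OF pos_selfadj[OF F(1)], of x] by (simp add: a_def complex_eq_iff)
    have Qb': "cinner x (Q x) = of_real b"
      using selfadj_Im[OF pos_selfadj[OF F(2)], of x] cinner_commute[of x "Q x"]
      by (simp add: b_def complex_eq_iff)
    have Qb2: "cinner (Q x) x = of_real b"
      using selfadj_Im[OF pos_selfadj[OF F(2)], of x] by (simp add: b_def complex_eq_iff)
    have m: "(cmod (cinner (A x) x))^2 \<le> a * b"
      using mixed_CS[OF A, of x x] by (simp add: a_def b_def P_def Q_def)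
    have bz: "2 * (a * b) \<le> norm (P x) * norm (Q x) + cmod (cinner (P x) (Q x))"
      using buzano[OF x, of "P x" "Q x"] a0 b0 by (simp add: Pa Qb' norm_mult)
    have sq: "(norm (P x))^2 + (norm (Q x))^2 \<le> onorm G"
    proof -
      have "(norm (P x))^2 = Re (cinner (P (P x)) x)"
        using positive_selfadj[OF F(1), of "P x" x] by (simp add: Re_cinner_self)
      moreover have "(norm (Q x))^2 = Re (cinner (Q (Q x)) x)"
        using positive_selfadj[OF F(2), of "Q x" x] by (simp add: Re_cinner_self)
      ultimately have "(norm (P x))^2 + (norm (Q x))^2 = Re (cinner (G x) x)"
        by (simp add: G_def cinner_simps)
      also have "\<dots> \<le> cmod (cinner (G x) x)" by (rule complex_Re_le_cmod)
      also have "\<dots> \<le> norm (G x) * norm x" by (rule CS)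
      also have "\<dots> \<le> onorm G * norm x * norm x"
        using onorm[OF bcl_bounded_linear[OF Gb], of x] by (intro mult_right_mono) auto
      finally show ?thesis using x by simp
    qed
    have pq: "cmod (cinner (P x) (Q x)) \<le> numrad (P \<circ> Q)"
    proof -
      have "cinner ((P \<circ> Q) x) x = cnj (cinner (P x) (Q x))"
        using pos_selfadj[OF F(1)] by (simp add: selfadj_def cinner_commute[of x])
      then show ?thesis using numrad_ge[OF PQb x] by simp
    qed
    have w: "a^2 + b^2 \<le> (numrad W)^2"
    proof -
      have "cinner (W x) x = of_real a - \<i> * of_real b"
        by (simp add: W_def cinner_simps Pa Qb2)
      then have "(cmod (cinner (W x) x))^2 = a^2 + b^2"
        by (simp add: cmod_power2)
      moreover have "cmod (cinner (W x) x) \<le> numrad W" by (rule numrad_ge[OF Wb x])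
      ultimately show ?thesis by (metis norm_ge_zero power_mono)
    qed
    have amgm: "norm (P x) * norm (Q x) \<le> ((norm (P x))^2 + (norm (Q x))^2) / 2"
      using sum_squares_bound[of "norm (P x)" "norm (Q x)"] by (simp add: power2_eq_square)
    have "2 * (a * b) \<le> a^2 + b^2"
      using sum_squares_bound[of a b] by (simp add: power2_eq_square)
    then have h1: "a * b \<le> (a^2 + b^2) / 4 + (a * b) / 2" by (simp add: field_simps)
    have h2: "(a * b) / 2 \<le> onorm G / 8 + numrad (P \<circ> Q) / 4"
      using bz amgm sq pq by simp
    have "a * b \<le> (numrad W)^2 / 4 + onorm G / 8 + numrad (P \<circ> Q) / 4"
      by (rule lin_aux[OF h1 h2 w])
    then show ?thesis using m by (simp add: RHS_def)
  qed
  have "0 \<le> onorm G" by (rule onorm_pos_le[OF bcl_bounded_linear[OF Gb]])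
  then have R0: "0 \<le> RHS" using numrad_nonneg[OF PQb] unfolding RHS_def by simp
  have "numrad A \<le> sqrt RHS"
  proof (rule numrad_le)
    fix x :: 'a assume "norm x = 1"
    then show "cmod (cinner (A x) x) \<le> sqrt RHS" using key by (simp add: real_le_rsqrt)
  qed (simp add: R0)
  then have "(numrad A)^2 \<le> RHS"
    using numrad_nonneg[OF A] R0 by (metis real_sqrt_le_iff real_sqrt_unique sqrt_le_D)
  then show ?thesis by (simp add: RHS_def W_def G_def P_def Q_def)
qed


end
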